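(* Let $\{f_t\}$ be the sequence generated by POLK with $f_0=0$, and suppose Assumptions (A1)–(A4) hold. Then for all $t$, $$\mathbb E\big[\|f_{t+1}-f^*\|_{\mathcal H}^2\mid\mathcal F_t\big]\le\|f_t-f^*\|_{\mathcal H}^2-2\eta_t\,[R(f_t)-R(f^* )]+2\epsilon_t\|f_t-f^*\|_{\mathcal H}+\eta_t^2\sigma^2.$$
   Context: Setting: $\mathcal X\subset\mathbb R^p$, $\mathcal Y\subset\mathbb R$; $\mathcal H$ is a reproducing kernel Hilbert space of functions $f:\mathcal X\to\mathbb R$ with reproducing kernel $\kappa$ (so $\langle f,\kappa(x,\cdot)\rangle_{\mathcal H}=f(x)$). $(x,y)$ is a random pair on $\mathcal X\times\mathcal Y$ with a fixed joint distribution, and $(x_t,y_t)$, $t=0,1,2,\dots$ are i.i.d. copies of it. The loss is $\ell:\mathbb R\times\mathcal Y\to\mathbb R$, $\ell'(z,y)=\partial\ell(z,y)/\partial z$. With $\lambda>0$, the regularized expected risk is $R(f)=\mathbb E_{x,y}[\ell(f(x),y)]+\frac{\lambda}{2}\|f\|_{\mathcal H}^2$ and $f^*=\arg\min_{f\in\mathcal H}R(f)$. POLK (Parsimonious Online Learning with Kernels): given step-sizes $\eta_t>0$ and approximation budgets $\epsilon_t>0$, set $f_0=0$ with empty dictionary $D_0$. At step $t$, with $f_t=\sum_{n=1}^{M_t}w_n\kappa(d_n,\cdot)$ parameterized by dictionary $D_t=[d_1,\dots,d_{M_t}]$, form $\tilde f_{t+1}=(1-\eta_t\lambda)f_t-\eta_t\ell'(f_t(x_t),y_t)\kappa(x_t,\cdot)$,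 represented by dictionary $\tilde D_{t+1}=[D_t,\,x_t]$. Then apply destructive kernel orthogonal matching pursuit (KOMP) with budget $\epsilon_t$: starting from $D=\tilde D_{t+1}$, repeatedly compute for each remaining element $d_j$ the error $\gamma_j=\min_{w}\|\tilde f_{t+1}-\sum_{k\neq j}w_k\kappa(d_k,\cdot)\|_{\mathcal H}$; if $\min_j\gamma_j>\epsilon_t$ stop, otherwise remove the minimizing element and continue (while the dictionary is nonempty). The output dictionary is $D_{t+1}$, and $f_{t+1}$ is the orthogonal projection of $\tilde f_{t+1}$ onto $\mathcal H_{D_{t+1}}=\mathrm{span}\{\kappa(d,\cdot):d\in D_{t+1}\}$; thus $\|f_{t+1}-\tilde f_{t+1}\|_{\mathcal H}\le\epsilon_t$. Define $\hat\nabla_t=\ell'(f_t(x_t),y_t)\kappa(x_t,\cdot)+\lambda f_t$ and the projected stochastic gradient $\tilde\nabla_t=(f_t-f_{t+1})/\eta_t$, so $f_{t+1}=f_t-\eta_t\tilde\nabla_t$. $\mathcal F_t$ denotes the sigma-algebra generated by the algorithm history up to time $t$ (so that $\mathbb E[\hat\nabla_t\mid\mathcal F_t]=\nabla_f R(f_t)$). Assumptions: (A1) $\mathcal X$ and $\mathcal Y$ are compact and $\sup_{x\in\mathcal X}\sqrt{\kappa(x,x)}=X<\infty$. (A2) $\ell$ is $C$-Lipschitz in its first argument: $|\ell(z,y)-\ell(z',y)|\le C|z-z'|$ for all $z,z'\in\mathbb R$, $y\in\mathcal Y$. (A3) $\ell(z,y)$ is convex and differentiable in $z$ on $\mathbb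 R$ for all $y$. (A4) $\mathbb E[\|\tilde\nabla_t\|_{\mathcal H}^2\mid\mathcal F_t]\le\sigma^2$ for all $t$. *)

theory Defs
  imports "HOL-Analysis.Analysis" "HOL-Probability.Probability"
begin

(* Abstract RKHS: 'h is a real Hilbert space, kf x is the feature kernel(x,.) in H,
   and f(x) = <f, kf x> (reproducing property). *)
definition heval :: "('a \<Rightarrow> 'h::real_inner) \<Rightarrow> 'h \<Rightarrow> 'a \<Rightarrow> real" where
  "heval kf f x = inner f (kf x)"

definition hspan :: "('a \<Rightarrow> 'h::real_inner) \<Rightarrow> 'a list \<Rightarrow> 'h set" where
  "hspan kf D = span (kf ` set D)"

definition hproj :: "'h::real_inner set \<Rightarrow> 'h \<Rightarrow> 'h" where
  "hproj S g = (SOME p. p \<in> S \<and> (\<forall>q\<in>S. dist g p \<le> dist g q))"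

definition remove_at :: "nat \<Rightarrow> 'a list \<Rightarrow> 'a list" where
  "remove_at j D = take j D @ drop (Suc j) D"

definition komp_gamma :: "('a \<Rightarrow> 'h::real_inner) \<Rightarrow> 'h \<Rightarrow> 'a list \<Rightarrow> nat \<Rightarrow> real" where
  "komp_gamma kf g D j = infdist g (hspan kf (remove_at j D))"

(* destructive KOMP, with n = number of remaining iterations allowed (fuel);
   ties in the minimizing index are broken by taking the first minimizer *)
primrec komp_aux :: "nat \<Rightarrow> ('a \<Rightarrow> 'h::real_inner) \<Rightarrow> real \<Rightarrow> 'h \<Rightarrow> 'a list \<Rightarrow> 'a list" where
  "komp_aux 0 kf eps g D = D"
| "komp_aux (Suc n) kf eps g D =
     (if D = [] then D
      else (let j = arg_min_list (komp_gamma kf g D) [0..<length D] in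
            if komp_gamma kf g D j > eps then D
            else komp_aux n kf eps g (remove_at j D)))"

definition komp :: "('a \<Rightarrow> 'h::real_inner) \<Rightarrow> real \<Rightarrow> 'h \<Rightarrow> 'a list \<Rightarrow> 'a list" where
  "komp kf eps g D = komp_aux (length D) kf eps g D"

definition polk_step ::
  "('a \<Rightarrow> 'h::real_inner) \<Rightarrow> (real \<Rightarrow> real \<Rightarrow> real) \<Rightarrow> real \<Rightarrow> real \<Rightarrow> real
   \<Rightarrow> 'a list \<times> 'h \<Rightarrow> 'a \<times> real \<Rightarrow> 'a list \<times> 'h" where
  "polk_step kf dl lam eta eps st z =
     (let D = fst st; f = snd st; x = fst z; y = snd z;
          g = (1 - eta * lam) *\<^sub>R f - (eta * dl (heval kf f x) y) *\<^sub>R kf x;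
          D' = komp kf eps g (D @ [x])
      in (D', hproj (hspan kf D') g))"

primrec polk ::
  "('a \<Rightarrow> 'h::real_inner) \<Rightarrow> (real \<Rightarrow> real \<Rightarrow> real) \<Rightarrow> real \<Rightarrow> (nat \<Rightarrow> real) \<Rightarrow> (nat \<Rightarrow> real)
   \<Rightarrow> (nat \<Rightarrow> 'a \<times> real) \<Rightarrow> nat \<Rightarrow> 'a list \<times> 'h" where
  "polk kf dl lam eta eps s 0 = ([], 0)"
| "polk kf dl lam eta eps s (Suc t) = polk_step kf dl lam (eta t) (eps t) (polk kf dl lam eta eps s t) (s t)"

definition risk ::
  "('a \<times> real) measure \<Rightarrow> ('a \<Rightarrow> 'h::real_inner) \<Rightarrow> (real \<Rightarrow> real \<Rightarrow> real) \<Rightarrow> real \<Rightarrow> 'h \<Rightarrow> real" where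
  "risk P kf loss lam f = (\<integral>z. loss (heval kf f (fst z)) (snd z) \<partial>P) + lam / 2 * (norm f)\<^sup>2"

end

theory Submission imports Defs begin

lemma proj_exists:
  fixes B :: "'h::real_inner set"
  assumes "finite B"
  shows "\<exists>P. \<forall>g. P g \<in> span B \<and> (\<forall>q\<in>span B. inner (g - P g) q = 0)"
  using assms
proof (induction B rule: finite_induct)
  case empty
  show ?case by (rule exI[of _ "\<lambda>g. 0"]) simp
next
  case (insert v B)
  then obtain P where P: "\<And>g. P g \<in> span B" "\<And>g q. q \<in> span B \<Longrightarrow> inner (g - P g) q = 0"
    by blast
  define u where "u = v - P v"
  have uorth: "inner u q = 0" if "q \<in> span B" for q using P(2)[OF that] by (simp add: u_def)
  show ?case
  proof (cases "u = 0")
    case True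
    then have "v \<in> span B" using P(1)[of v] by (simp add: u_def)
    then have e: "span (insert v B) = span B" by (simp add: span_redundant)
    show ?thesis unfolding e using P by blast
  next
    case False
    define P' where "P' g = P g + (inner g u / inner u u) *\<^sub>R u" for g
    have uin: "u \<in> span (insert v B)" unfolding u_def
      by (meson P(1) span_base span_diff insertI1 span_mono subset_insertI subsetD)
    show ?thesis
    proof (intro exI allI conjI ballI)
      fix g
      show "P' g \<in> span (insert v B)" unfolding P'_def
        by (meson P(1) span_add span_scale uin span_mono subset_insertI subsetD)
      fix q assume "q \<in> span (insert v B)"
      then obtain k where k: "q - k *\<^sub>R v \<in> span B" by (auto simp: span_breakdown_eq)
      define b where "b = q - k *\<^sub>R v + k *\<^sub>R P v"
      have b: "b \<in> span B" unfolding b_def using k P(1) by (simp add: span_add span_scale)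
      have q: "q = b + k *\<^sub>R u" by (simp add: b_def u_def algebra_simps)
      have uu: "inner u u \<noteq> 0" using False by simp
      have gu: "inner (P g) u = 0" using uorth[OF P(1)[of g]] by (simp add: inner_commute)
      have "inner (g - P' g) q = inner (g - P g) b + k * inner (g - P g) u
            - (inner g u / inner u u) * (inner u b + k * inner u u)"
        unfolding q P'_def by (simp add: inner_add_right inner_add_left inner_diff_left algebra_simps)
      also have "\<dots> = 0" using P(2)[OF b] uorth[OF b] gu uu
        by (simp add: inner_diff_left field_simps)
      finally show "inner (g - P' g) q = 0" .
    qed
  qed
qed

lemma hproj_prop:
  fixes kf :: "'a \<Rightarrow> 'h::real_inner"
  shows "hproj (hspan kf D) g \<in> hspan kf D \<and> dist g (hproj (hspan kf D) g) = infdist g (hspan kf D)"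
proof -
  obtain P where P: "\<And>g. P g \<in> span (kf ` set D)" "\<And>g q. q \<in> span (kf ` set D) \<Longrightarrow> inner (g - P g) q = 0"
    using proj_exists[of "kf ` set D"] by auto
  have "\<exists>p. p \<in> hspan kf D \<and> (\<forall>q\<in>hspan kf D. dist g p \<le> dist g q)"
  proof (intro exI conjI ballI)
    show "P g \<in> hspan kf D" using P(1) by (simp add: hspan_def)
    fix q assume q: "q \<in> hspan kf D"
    have "P g - q \<in> span (kf ` set D)" using P(1) q by (simp add: hspan_def span_diff)
    then have o: "inner (g - P g) (P g - q) = 0" by (rule P(2))
    have "(dist g q)\<^sup>2 = (norm ((g - P g) + (P g - q)))\<^sup>2" by (simp add: dist_norm)
    also have "\<dots> = (norm (g - P g))\<^sup>2 + (norm (P g - q))\<^sup>2"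
      using norm_add_Pythagorean[of "g - P g" "P g - q"] o unfolding orthogonal_def by blast
    finally have "(dist g (P g))\<^sup>2 \<le> (dist g q)\<^sup>2" by (simp add: dist_norm)
    then show "dist g (P g) \<le> dist g q" by (rule power2_le_imp_le) simp
  qed
  from someI_ex[OF this]
  have h: "hproj (hspan kf D) g \<in> hspan kf D" "\<And>q. q \<in> hspan kf D \<Longrightarrow> dist g (hproj (hspan kf D) g) \<le> dist g q"
    unfolding hproj_def by blast+
  have "infdist g (hspan kf D) = (INF a\<in>hspan kf D. dist g a)"
    using h(1) by (intro infdist_notempty) auto
  also have "\<dots> = dist g (hproj (hspan kf D) g)"
  proof (rule antisym)
    show "(INF a\<in>hspan kf D. dist g a) \<le> dist g (hproj (hspan kf D) g)"
      by (rule cINF_lower) (use h(1) in \<open>auto intro: bdd_belowI2[where m=0]\<close>)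
    show "dist g (hproj (hspan kf D) g) \<le> (INF a\<in>hspan kf D. dist g a)"
      by (rule cINF_greatest) (use h in auto)
  qed
  finally show ?thesis using h(1) by simp
qed

lemma komp_aux_inv:
  "infdist g (hspan kf D) \<le> eps \<Longrightarrow> infdist g (hspan kf (komp_aux n kf eps g D)) \<le> eps"
proof (induction n arbitrary: D)
  case 0 then show ?case by simp
next
  case (Suc n)
  show ?case
  proof (cases "D = []")
    case True then show ?thesis using Suc.prems by simp
  next
    case False
    define j where "j = arg_min_list (komp_gamma kf g D) [0..<length D]"
    show ?thesis
    proof (cases "komp_gamma kf g D j > eps")
      case True then show ?thesis using Suc.prems False by (simp add: j_def Let_def)
    next
      case F: False
      then have "infdist g (hspan kf (remove_at j D)) \<le> eps" by (simp add: komp_gamma_def)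
      from Suc.IH[OF this] show ?thesis using False F by (simp add: j_def Let_def)
    qed
  qed
qed

lemma polk_cong:
  "(\<forall>i<t. s' i = s i) \<Longrightarrow> polk kf dl lam eta eps s' t = polk kf dl lam eta eps s t"
  by (induction t) auto

lemma polk_inv:
  "snd (polk kf dl lam eta eps s t) \<in> hspan kf (fst (polk kf dl lam eta eps s t))"
proof (induction t)
  case 0 then show ?case by (simp add: hspan_def span_zero)
next
  case (Suc t)
  then show ?case using hproj_prop by (simp add: polk_step_def Let_def del: hspan_def) blast
qed

lemma step_close:
  fixes kf :: "'a \<Rightarrow> 'h::real_inner" and x :: 'a and y eta lam :: real and dl :: "real \<Rightarrow> real \<Rightarrow> real"
  assumes "f \<in> hspan kf D" "eps \<ge> 0"
  defines "g \<equiv> (1 - eta * lam) *\<^sub>R f - (eta * dl (heval kf f x) y) *\<^sub>R kf x"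
  shows "norm (snd (polk_step kf dl lam eta eps (D, f) (x, y)) - g) \<le> eps"
proof -
  have "g \<in> hspan kf (D @ [x])"
  proof -
    have "f \<in> span (kf ` set (D @ [x]))" using assms(1) unfolding hspan_def
      using span_mono[of "kf ` set D" "kf ` set (D @ [x])"] by auto
    moreover have "kf x \<in> span (kf ` set (D @ [x]))" by (intro span_base) auto
    ultimately show ?thesis unfolding g_def hspan_def by (intro span_diff span_scale)
  qed
  then have "infdist g (hspan kf (D @ [x])) \<le> eps" using assms(2) by simp
  then have "infdist g (hspan kf (komp kf eps g (D @ [x]))) \<le> eps"
    unfolding komp_def by (rule komp_aux_inv)
  then show ?thesis using hproj_prop[of kf "komp kf eps g (D @ [x])" g]
    by (simp add: polk_step_def Let_def g_def dist_norm norm_minus_commute)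
qed

lemma pointwise:
  fixes f fs f' g k :: "'h::real_inner"
  assumes eta: "eta > 0" and lam: "lam \<ge> 0" and close: "norm (f' - g) \<le> e"
    and gdef: "g = (1 - eta * lam) *\<^sub>R f - (eta * c) *\<^sub>R k"
    and tang: "ls - lf \<ge> c * (inner fs k - inner f k)"
  shows "(norm (f' - fs))\<^sup>2 \<le> (norm (f - fs))\<^sup>2 + 2 * eta * (ls - lf)
           + eta * lam * ((norm fs)\<^sup>2 - (norm f)\<^sup>2) + 2 * e * norm (f - fs)
           + eta\<^sup>2 * (norm ((1 / eta) *\<^sub>R (f - f')))\<^sup>2"
proof -
  define a where "a = f - fs"
  define d where "d = f - f'"
  have fa: "f' - fs = a - d" by (simp add: a_def d_def)
  have n1: "(norm (a - d))\<^sup>2 = (norm a)\<^sup>2 - 2 * inner d a + (norm d)\<^sup>2"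
    by (simp add: power2_norm_eq_inner inner_diff_left inner_diff_right inner_commute)
  have n2: "eta\<^sup>2 * (norm ((1 / eta) *\<^sub>R d))\<^sup>2 = (norm d)\<^sup>2"
    using eta by (simp add: power_mult_distrib power2_eq_square field_simps)
  have dd: "d = eta *\<^sub>R (lam *\<^sub>R f + c *\<^sub>R k) + (g - f')"
    by (simp add: d_def gdef algebra_simps)
  have ida: "inner d a = eta * (lam * inner f a + c * (inner f k - inner fs k)) + inner (g - f') a"
    by (simp add: dd a_def inner_add_left inner_diff_right inner_commute algebra_simps)
  have e1: "inner (g - f') a \<ge> - (e * norm a)"
  proof -
    have "\<bar>inner (g - f') a\<bar> \<le> norm (g - f') * norm a" by (rule Cauchy_Schwarz_ineq2)
    also have "\<dots> \<le> e * norm a" using close by (intro mult_right_mono) (auto simp: norm_minus_commute)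
    finally show ?thesis by linarith
  qed
  have e2: "inner f a \<ge> ((norm f)\<^sup>2 - (norm fs)\<^sup>2) / 2"
  proof -
    have "0 \<le> (norm (f - fs))\<^sup>2" by simp
    then show ?thesis
      by (simp add: a_def power2_norm_eq_inner inner_diff_left inner_diff_right inner_commute)
  qed
  have e3: "eta * (lam * inner f a) \<ge> eta * (lam * (((norm f)\<^sup>2 - (norm fs)\<^sup>2) / 2))"
    using e2 eta lam by (intro mult_left_mono) auto
  have e4: "eta * (c * (inner f k - inner fs k)) \<ge> eta * (lf - ls)"
    using tang eta by (intro mult_left_mono) (auto simp: right_diff_distrib)
  show ?thesis unfolding fa n1 d_def[symmetric] n2 a_def[symmetric]
    using ida e1 e3 e4 by (simp add: algebra_simps)
qed

theorem lemma1:
  fixes kf :: "real ^ 'p \<Rightarrow> 'h::{real_inner, complete_space}"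
    and P :: "((real ^ 'p) \<times> real) measure"
    and Xs :: "(real ^ 'p) set" and Ys :: "real set"
    and loss dl :: "real \<Rightarrow> real \<Rightarrow> real"
    and lam C Xk sigma :: real
    and eta eps :: "nat \<Rightarrow> real"
    and fstar :: 'h
  assumes rkhs: "closure (span (range kf)) = UNIV"
    and kf_meas: "kf \<in> borel_measurable borel"
    and prob: "prob_space P" and sets_P: "sets P = sets borel"
    and supp: "AE z in P. z \<in> Xs \<times> Ys"
    and lam_pos: "lam > 0" and eta_pos: "\<And>t. eta t > 0" and eps_pos: "\<And>t. eps t > 0"
    and A1: "compact Xs" "compact Ys" "\<And>x. x \<in> Xs \<Longrightarrow> sqrt (inner (kf x) (kf x)) \<le> Xk"
    and A2: "\<And>z z' y. y \<in> Ys \<Longrightarrow> \<bar>loss z y - loss z' y\<bar> \<le> C * \<bar>z - z'\<bar>"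
    and A3: "\<And>y. y \<in> Ys \<Longrightarrow> convex_on UNIV (\<lambda>z. loss z y)"
            "\<And>z y. y \<in> Ys \<Longrightarrow> ((\<lambda>z. loss z y) has_real_derivative dl z y) (at z)"
    and loss_meas: "(\<lambda>(z, y). loss z y) \<in> borel_measurable borel"
    and risk_defined: "\<And>f. integrable P (\<lambda>z. loss (heval kf f (fst z)) (snd z))"
    and fstar_min: "\<And>f. risk P kf loss lam fstar \<le> risk P kf loss lam f"
    and step_meas: "\<And>s t. (\<forall>i<t. s i \<in> Xs \<times> Ys) \<Longrightarrow>
            (\<lambda>z. snd (polk kf dl lam eta eps (s(t := z)) (Suc t))) \<in> borel_measurable P"
    and A4: "\<And>s t. (\<forall>i<t. s i \<in> Xs \<times> Ys) \<Longrightarrow>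
            integrable P (\<lambda>z. (norm ((1 / eta t) *\<^sub>R (snd (polk kf dl lam eta eps s t)
                                 - snd (polk kf dl lam eta eps (s(t := z)) (Suc t)))))\<^sup>2) \<and>
            (\<integral>z. (norm ((1 / eta t) *\<^sub>R (snd (polk kf dl lam eta eps s t)
                                 - snd (polk kf dl lam eta eps (s(t := z)) (Suc t)))))\<^sup>2 \<partial>P) \<le> sigma\<^sup>2"
  shows "\<forall>i<t. s i \<in> Xs \<times> Ys \<Longrightarrow>
    (\<integral>z. (norm (snd (polk kf dl lam eta eps (s(t := z)) (Suc t)) - fstar))\<^sup>2 \<partial>P)
      \<le> (norm (snd (polk kf dl lam eta eps s t) - fstar))\<^sup>2
         - 2 * eta t * (risk P kf loss lam (snd (polk kf dl lam eta eps s t)) - risk P kf loss lam fstar)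
         + 2 * eps t * norm (snd (polk kf dl lam eta eps s t) - fstar)
         + (eta t)\<^sup>2 * sigma\<^sup>2"
proof -
  assume hs: "\<forall>i<t. s i \<in> Xs \<times> Ys"
  interpret prob_space P by (rule prob)
  define f where "f = snd (polk kf dl lam eta eps s t)"
  define D where "D = fst (polk kf dl lam eta eps s t)"
  define f' where "f' = (\<lambda>z. snd (polk kf dl lam eta eps (s(t := z)) (Suc t)))"
  have f'eq: "f' z = snd (polk_step kf dl lam (eta t) (eps t) (D, f) z)" for z
    using polk_cong[of t "s(t:=z)" s kf dl lam eta eps] by (simp add: f'_def f_def D_def)
  have finD: "f \<in> hspan kf D" using polk_inv by (simp add: f_def D_def)
  define Lf where "Lf = (\<lambda>z. loss (heval kf f (fst z)) (snd z))"
  define Ls where "Ls = (\<lambda>z. loss (heval kf fstar (fst z)) (snd z))"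
  define N where "N = (\<lambda>z. (norm ((1 / eta t) *\<^sub>R (f - f' z)))\<^sup>2)"
  define K where "K = (norm (f - fstar))\<^sup>2 + eta t * lam * ((norm fstar)\<^sup>2 - (norm f)\<^sup>2) + 2 * eps t * norm (f - fstar)"
  define h where "h = (\<lambda>z. K + (2 * eta t * (Ls z - Lf z) + (eta t)\<^sup>2 * N z))"
  have pw: "(norm (f' z - fstar))\<^sup>2 \<le> h z" if zy: "snd z \<in> Ys" for z
  proof -
    obtain x y where z: "z = (x, y)" by (cases z)
    with zy have y: "y \<in> Ys" by simp
    have der: "((\<lambda>z. loss z y) has_field_derivative dl (heval kf f x) y) (at (heval kf f x) within UNIV)"
      using A3(2)[OF y] by simp
    have tang: "loss (heval kf fstar x) y - loss (heval kf f x) y \<ge> dl (heval kf f x) y * (heval kf fstar x - heval kf f x)"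
      using convex_on_imp_above_tangent[OF A3(1)[OF y] connected_UNIV _ _ der] by simp
    have cl: "norm (f' z - ((1 - eta t * lam) *\<^sub>R f - (eta t * dl (heval kf f x) y) *\<^sub>R kf x)) \<le> eps t"
      unfolding f'eq z using step_close[OF finD, of "eps t"] eps_pos[of t] by simp
    have "(norm (f' z - fstar))\<^sup>2 \<le> (norm (f - fstar))\<^sup>2 + 2 * eta t * (Ls z - Lf z)
           + eta t * lam * ((norm fstar)\<^sup>2 - (norm f)\<^sup>2) + 2 * eps t * norm (f - fstar)
           + (eta t)\<^sup>2 * (norm ((1 / eta t) *\<^sub>R (f - f' z)))\<^sup>2"
      using pointwise[OF eta_pos[of t] _ cl refl, where lf="loss (heval kf f x) y" and ls="loss (heval kf fstar x) y" and fs=fstar] lam_pos tang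
      by (simp add: heval_def Ls_def Lf_def z)
    then show ?thesis by (simp add: h_def K_def N_def)
  qed
  have ae: "AE z in P. (norm (f' z - fstar))\<^sup>2 \<le> h z"
    using supp by eventually_elim (auto intro: pw)
  have ae0: "AE z in P. 0 \<le> h z"
    using ae by eventually_elim (meson order_trans zero_le_power2)
  have iLf: "integrable P Lf" unfolding Lf_def by (rule risk_defined)
  have iLs: "integrable P Ls" unfolding Ls_def by (rule risk_defined)
  have A4': "integrable P N \<and> (\<integral>z. N z \<partial>P) \<le> sigma\<^sup>2"
    using A4[OF hs] by (simp add: N_def f'_def f_def)
  have iN: "integrable P N" using A4' by simp
  have ih2: "integrable P (\<lambda>z. 2 * eta t * (Ls z - Lf z) + (eta t)\<^sup>2 * N z)"
    using iLf iLs iN by (intro Bochner_Integration.integrable_add integrable_mult_right Bochner_Integration.integrable_diff) auto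
  have ih: "integrable P h" unfolding h_def by (rule Bochner_Integration.integrable_add[OF integrable_const ih2])
  have "(\<integral>z. h z \<partial>P) = K + (2 * eta t * ((\<integral>z. Ls z \<partial>P) - (\<integral>z. Lf z \<partial>P)) + (eta t)\<^sup>2 * (\<integral>z. N z \<partial>P))"
  proof -
    have "(\<integral>z. h z \<partial>P) = (\<integral>z. K \<partial>P) + (\<integral>z. 2 * eta t * (Ls z - Lf z) + (eta t)\<^sup>2 * N z \<partial>P)"
      unfolding h_def by (rule Bochner_Integration.integral_add[OF integrable_const ih2])
    also have "(\<integral>z. 2 * eta t * (Ls z - Lf z) + (eta t)\<^sup>2 * N z \<partial>P)
        = (\<integral>z. 2 * eta t * (Ls z - Lf z) \<partial>P) + (\<integral>z. (eta t)\<^sup>2 * N z \<partial>P)"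
      using iLf iLs iN by (intro Bochner_Integration.integral_add integrable_mult_right Bochner_Integration.integrable_diff) auto
    also have "(\<integral>z. 2 * eta t * (Ls z - Lf z) \<partial>P) = 2 * eta t * ((\<integral>z. Ls z \<partial>P) - (\<integral>z. Lf z \<partial>P))"
      using iLf iLs by (simp add: Bochner_Integration.integral_diff)
    finally show ?thesis by (simp add: prob_space)
  qed
  also have "\<dots> \<le> K + (2 * eta t * ((\<integral>z. Ls z \<partial>P) - (\<integral>z. Lf z \<partial>P)) + (eta t)\<^sup>2 * sigma\<^sup>2)"
    using A4' by (simp add: mult_left_mono)
  finally have hb: "(\<integral>z. h z \<partial>P) \<le> K + (2 * eta t * ((\<integral>z. Ls z \<partial>P) - (\<integral>z. Lf z \<partial>P)) + (eta t)\<^sup>2 * sigma\<^sup>2)" .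
  have "(\<integral>z. (norm (f' z - fstar))\<^sup>2 \<partial>P) \<le> (\<integral>z. h z \<partial>P)"
    by (rule integral_mono_AE'[OF ih ae ae0])
  also note hb
  finally have main: "(\<integral>z. (norm (f' z - fstar))\<^sup>2 \<partial>P) \<le> K + (2 * eta t * ((\<integral>z. Ls z \<partial>P) - (\<integral>z. Lf z \<partial>P)) + (eta t)\<^sup>2 * sigma\<^sup>2)" .
  have rf: "risk P kf loss lam f = (\<integral>z. Lf z \<partial>P) + lam / 2 * (norm f)\<^sup>2" by (simp add: risk_def Lf_def)
  have rs: "risk P kf loss lam fstar = (\<integral>z. Ls z \<partial>P) + lam / 2 * (norm fstar)\<^sup>2" by (simp add: risk_def Ls_def)
  have "(\<integral>z. (norm (f' z - fstar))\<^sup>2 \<partial>P) \<le> (norm (f - fstar))\<^sup>2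
         - 2 * eta t * (risk P kf loss lam f - risk P kf loss lam fstar)
         + 2 * eps t * norm (f - fstar) + (eta t)\<^sup>2 * sigma\<^sup>2"
    using main unfolding rf rs K_def by (simp add: algebra_simps)
  then show ?thesis by (simp add: f_def f'_def)
qed

end
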